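(* Let $E$ be a closed term with $\vdash E:(\neg X\to X)\to X$, where $X$ is a propositional variable. Then for each $\lambda$-variable $x$, each finite sequence of $\lambda$-variables $\bar y$, and each sequence of $\lambda$-variables $(z_i)_{i\in\mathbb N^*}$ such that $x$ and the variables of $\bar y$ are different from every $z_i$, there exist $m\in\mathbb N^*$ and terms $\theta_1,\dots,\theta_m$ such that: $(E\;x)\;\bar y\triangleright^*\underline{\mu}.((x\;\theta_1)\;\bar y)$; $(\theta_k\;z_k)\triangleright^*\underline{\mu}.((x\;\theta_{k+1})\;\bar y)$ for all $1\le k\le m-1$; and $(\theta_m\;z_m)\triangleright^*\underline{\mu}.(z_l\;\bar y)$ for some $1\le l\le m$.
   Context: $\lambda\mu$-terms: $t::= x\mid \lambda x.t\mid (t\;t)\mid \mu a.t\mid (a\;t)$ over disjoint infinite sets of $\lambda$-variables and $\mu$-variables; types built from propositional variables and $\perp$ with $\to$; $\neg A$ denotes $A\to\perp$. Reduction $(\lambda x.u\;v)\triangleright u[x:=v]$, $(\mu a.u\;v)\triangleright\mu a.u[a:=^*v]$ ($u[a:=^*v]$ replaces each subterm $(a\;w)$ of $u$ by $(a\;(w\;v))$), $\triangleright^*$ its reflexive transitive compatible closure. Typing rules: (ax) $\Gamma\vdash x:A;\Delta$ if $x:A\in\Gamma$; ($\to_i$) from $\Gamma,x:A\vdash t:B;\Delta$ infer $\Gamma\vdash\lambda x.t:A\to B;\Delta$; ($\to_e$) from $\Gamma\vdash u:A\to B;\Delta$, $\Gamma\vdash v:A;\Delta$ infer $\Gamma\vdash(u\;v):B;\Delta$;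 ($\mu$) from $\Gamma\vdash t:\perp;\Delta,a:A$ infer $\Gamma\vdash\mu a.t:A;\Delta$; ($\perp$) from $\Gamma\vdash t:A;\Delta,a:A$ infer $\Gamma\vdash(a\;t):\perp;\Delta,a:A$; $\vdash$ means empty contexts. For a sequence $\bar y=y_1\dots y_n$, $t\;\bar y=((t\;y_1)\dots y_n)$. For a term $t$, $M_t$ is the smallest set containing $t$ such that $w\in M_t$ and $a$ a $\mu$-variable imply $\mu a.w\in M_t$ and $(a\;w)\in M_t$; $\underline{\mu}.t$ denotes an arbitrary element of $M_t$ (different occurrences may denote different elements). *)

theory Defs
  imports Main
begin

text \<open>Lambda-mu terms in de Bruijn representation with two independent index spaces:
  lambda-variables (Var i, bound by Lam) and mu-variables (the index a in Nam a t, bound by Mu).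
  Free variables are the indices that exceed the number of enclosing binders of their kind;
  a free variable "named" n at top level is the index n.
  Nam a t represents the named term (a t).\<close>

datatype trm = Var nat | Lam trm | App trm trm | Mu trm | Nam nat trm

datatype ty = PV nat | Bot | Arr ty ty

definition neg :: "ty \<Rightarrow> ty" where "neg A = Arr A Bot"

fun lift_l :: "nat \<Rightarrow> trm \<Rightarrow> trm" where
  "lift_l k (Var i) = (if i < k then Var i else Var (Suc i))"
| "lift_l k (Lam t) = Lam (lift_l (Suc k) t)"
| "lift_l k (App t u) = App (lift_l k t) (lift_l k u)"
| "lift_l k (Mu t) = Mu (lift_l k t)"
| "lift_l k (Nam a t) = Nam a (lift_l k t)"

fun lift_m :: "nat \<Rightarrow> trm \<Rightarrow> trm" where
  "lift_m k (Var i) = Var i"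
| "lift_m k (Lam t) = Lam (lift_m k t)"
| "lift_m k (App t u) = App (lift_m k t) (lift_m k u)"
| "lift_m k (Mu t) = Mu (lift_m (Suc k) t)"
| "lift_m k (Nam a t) = Nam (if a < k then a else Suc a) (lift_m k t)"

fun subst_l :: "trm \<Rightarrow> nat \<Rightarrow> trm \<Rightarrow> trm" where
  "subst_l (Var i) k s = (if i < k then Var i else if i = k then s else Var (i - 1))"
| "subst_l (Lam t) k s = Lam (subst_l t (Suc k) (lift_l 0 s))"
| "subst_l (App t u) k s = App (subst_l t k s) (subst_l u k s)"
| "subst_l (Mu t) k s = Mu (subst_l t k (lift_m 0 s))"
| "subst_l (Nam a t) k s = Nam a (subst_l t k s)"

fun subst_m :: "trm \<Rightarrow> nat \<Rightarrow> trm \<Rightarrow> trm" where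
  "subst_m (Var i) k v = Var i"
| "subst_m (Lam t) k v = Lam (subst_m t k (lift_l 0 v))"
| "subst_m (App t u) k v = App (subst_m t k v) (subst_m u k v)"
| "subst_m (Mu t) k v = Mu (subst_m t (Suc k) (lift_m 0 v))"
| "subst_m (Nam a t) k v =
     (if a = k then Nam a (App (subst_m t k v) v) else Nam a (subst_m t k v))"

inductive red1 :: "trm \<Rightarrow> trm \<Rightarrow> bool" where
  beta: "red1 (App (Lam u) v) (subst_l u 0 v)"
| mu: "red1 (App (Mu u) v) (Mu (subst_m u 0 (lift_m 0 v)))"
| lam: "red1 t t' \<Longrightarrow> red1 (Lam t) (Lam t')"
| appL: "red1 t t' \<Longrightarrow> red1 (App t u) (App t' u)"
| appR: "red1 u u' \<Longrightarrow> red1 (App t u) (App t u')"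
| muC: "red1 t t' \<Longrightarrow> red1 (Mu t) (Mu t')"
| nam: "red1 t t' \<Longrightarrow> red1 (Nam a t) (Nam a t')"

definition red :: "trm \<Rightarrow> trm \<Rightarrow> bool" where "red = red1\<^sup>*\<^sup>*"

text \<open>Typing; Gamma and Delta are lists indexed by de Bruijn index (head = innermost binder).\<close>
inductive typing :: "ty list \<Rightarrow> ty list \<Rightarrow> trm \<Rightarrow> ty \<Rightarrow> bool" where
  ax: "i < length \<Gamma> \<Longrightarrow> typing \<Gamma> \<Delta> (Var i) (\<Gamma> ! i)"
| arr_i: "typing (A # \<Gamma>) \<Delta> t B \<Longrightarrow> typing \<Gamma> \<Delta> (Lam t) (Arr A B)"
| arr_e: "typing \<Gamma> \<Delta> u (Arr A B) \<Longrightarrow> typing \<Gamma> \<Delta> v A \<Longrightarrow> typing \<Gamma> \<Delta> (App u v) B"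
| mu_i: "typing \<Gamma> (A # \<Delta>) t Bot \<Longrightarrow> typing \<Gamma> \<Delta> (Mu t) A"
| bot_i: "a < length \<Delta> \<Longrightarrow> typing \<Gamma> \<Delta> t (\<Delta> ! a) \<Longrightarrow> typing \<Gamma> \<Delta> (Nam a t) Bot"

fun lclosed :: "nat \<Rightarrow> trm \<Rightarrow> bool" where
  "lclosed k (Var i) = (i < k)"
| "lclosed k (Lam t) = lclosed (Suc k) t"
| "lclosed k (App t u) = (lclosed k t \<and> lclosed k u)"
| "lclosed k (Mu t) = lclosed k t"
| "lclosed k (Nam a t) = lclosed k t"

fun mclosed :: "nat \<Rightarrow> trm \<Rightarrow> bool" where
  "mclosed k (Var i) = True"
| "mclosed k (Lam t) = mclosed k t"
| "mclosed k (App t u) = (mclosed k t \<and> mclosed k u)"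
| "mclosed k (Mu t) = mclosed (Suc k) t"
| "mclosed k (Nam a t) = (a < k \<and> mclosed k t)"

definition closed :: "trm \<Rightarrow> bool" where "closed t = (lclosed 0 t \<and> mclosed 0 t)"

text \<open>mu_bind a d t: abstracts the free mu-variable a of t (at binder depth d), so that
  Mu (mu_bind a 0 t) represents the named term (mu a. t).\<close>
fun mu_bind :: "nat \<Rightarrow> nat \<Rightarrow> trm \<Rightarrow> trm" where
  "mu_bind a d (Var i) = Var i"
| "mu_bind a d (Lam t) = Lam (mu_bind a d t)"
| "mu_bind a d (App t u) = App (mu_bind a d t) (mu_bind a d u)"
| "mu_bind a d (Mu t) = Mu (mu_bind a (Suc d) t)"
| "mu_bind a d (Nam b t) =
     Nam (if b < d then b else if b - d = a then d else Suc b) (mu_bind a d t)"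

inductive_set Mset :: "trm \<Rightarrow> trm set" for t where
  base: "t \<in> Mset t"
| mu_w: "w \<in> Mset t \<Longrightarrow> Mu (mu_bind a 0 w) \<in> Mset t"
| nam_w: "w \<in> Mset t \<Longrightarrow> Nam a w \<in> Mset t"

text \<open>t reduces to some element of M_u  (t |>* mu.u).\<close>
definition red_mu :: "trm \<Rightarrow> trm \<Rightarrow> bool" where
  "red_mu t u = (\<exists>w \<in> Mset u. red t w)"

definition apps :: "trm \<Rightarrow> nat list \<Rightarrow> trm" where
  "apps t ys = foldl (\<lambda>s y. App s (Var y)) t ys"

end

theory Submission
  imports Defs
begin


definition upr :: "(nat \<Rightarrow> nat) \<Rightarrow> nat \<Rightarrow> nat" where
  "upr r i = (case i of 0 \<Rightarrow> 0 | Suc j \<Rightarrow> Suc (r j))"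

lemma upr_simps[simp]: "upr r 0 = 0" "upr r (Suc j) = Suc (r j)"
  by (simp_all add: upr_def)

lemma upr_id[simp]: "upr (\<lambda>a. a) = (\<lambda>a. a)"
  by (rule ext, simp add: upr_def split: nat.split)

lemma upr_comp: "(\<lambda>i. upr r2 (upr r1 i)) = upr (\<lambda>i. r2 (r1 i))"
  by (rule ext, simp add: upr_def split: nat.split)

lemma upr_zero_iff[simp]: "(upr r a = 0) = (a = 0)"
  by (simp add: upr_def split: nat.split)

fun ren :: "(nat \<Rightarrow> nat) \<Rightarrow> (nat \<Rightarrow> nat) \<Rightarrow> trm \<Rightarrow> trm" where
  "ren r g (Var i) = Var (r i)"
| "ren r g (Lam t) = Lam (ren (upr r) g t)"
| "ren r g (App t u) = App (ren r g t) (ren r g u)"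
| "ren r g (Mu t) = Mu (ren r (upr g) t)"
| "ren r g (Nam a t) = Nam (g a) (ren r g t)"

lemma ren_ren: "ren r2 g2 (ren r1 g1 t) = ren (\<lambda>i. r2 (r1 i)) (\<lambda>a. g2 (g1 a)) t"
  by (induction t arbitrary: r1 g1 r2 g2) (simp_all add: upr_comp)

lemma ren_id[simp]: "ren (\<lambda>a. a) (\<lambda>a. a) t = t"
  by (induction t) simp_all

definition appl :: "trm \<Rightarrow> trm list \<Rightarrow> trm" where "appl t us = foldl App t us"

lemma appl_simps[simp]: "appl t [] = t" "appl t (u # us) = appl (App t u) us"
  "appl t (us @ vs) = appl (appl t us) vs"
  by (simp_all add: appl_def)

lemma apps_appl: "apps t ys = appl t (map Var ys)"
  by (simp add: apps_def appl_def foldl_map)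

lemma ren_appl: "ren r g (appl t us) = appl (ren r g t) (map (ren r g) us)"
  by (induction us arbitrary: t) simp_all

definition upl :: "(nat \<Rightarrow> trm) \<Rightarrow> nat \<Rightarrow> trm" where
  "upl s i = (case i of 0 \<Rightarrow> Var 0 | Suc j \<Rightarrow> ren Suc (\<lambda>a. a) (s j))"

lemma upl_simps[simp]: "upl s 0 = Var 0" "upl s (Suc j) = ren Suc (\<lambda>a. a) (s j)"
  by (simp_all add: upl_def)

definition upm :: "(nat \<Rightarrow> trm list) \<Rightarrow> nat \<Rightarrow> trm list" where
  "upm p a = (case a of 0 \<Rightarrow> [] | Suc b \<Rightarrow> map (ren (\<lambda>i. i) Suc) (p b))"

lemma upm_simps[simp]: "upm p 0 = []" "upm p (Suc b) = map (ren (\<lambda>i. i) Suc) (p b)"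
  by (simp_all add: upm_def)

fun gsub :: "(nat \<Rightarrow> trm) \<Rightarrow> (nat \<Rightarrow> nat) \<Rightarrow> (nat \<Rightarrow> trm list) \<Rightarrow> trm \<Rightarrow> trm" where
  "gsub s f p (Var i) = s i"
| "gsub s f p (Lam t) = Lam (gsub (upl s) f (\<lambda>a. map (ren Suc (\<lambda>a. a)) (p a)) t)"
| "gsub s f p (App t u) = App (gsub s f p t) (gsub s f p u)"
| "gsub s f p (Mu t) = Mu (gsub (\<lambda>i. ren (\<lambda>i. i) Suc (s i)) (upr f) (upm p) t)"
| "gsub s f p (Nam a t) = Nam (f a) (appl (gsub s f p t) (p a))"

lemma gsub_appl: "gsub s f p (appl t us) = appl (gsub s f p t) (map (gsub s f p) us)"
  by (induction us arbitrary: t) simp_all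

lemma ren_gsub: "ren r g t = gsub (\<lambda>i. Var (r i)) g (\<lambda>_. []) t"
proof (induction t arbitrary: r g)
  case (Lam t)
  have "upl (\<lambda>i. Var (r i)) = (\<lambda>i. Var (upr r i))"
    by (rule ext, simp add: upl_def split: nat.split)
  then show ?case using Lam by simp
next
  case (Mu t)
  have "upm (\<lambda>_. []) = (\<lambda>_. [])"
    by (rule ext, simp add: upm_def split: nat.split)
  then show ?case using Mu by simp
qed simp_all

lemma sub_ren: "gsub s f p (ren r g t) = gsub (\<lambda>i. s (r i)) (\<lambda>a. f (g a)) (\<lambda>a. p (g a)) t"
proof (induction t arbitrary: s f p r g)
  case (Lam t)
  have "(\<lambda>i. upl s (upr r i)) = upl (\<lambda>i. s (r i))"
    by (rule ext, simp add: upl_def split: nat.split)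
  then show ?case using Lam by simp
next
  case (Mu t)
  have "(\<lambda>a. upr f (upr g a)) = upr (\<lambda>a. f (g a))" by (rule upr_comp)
  moreover have "(\<lambda>a. upm p (upr g a)) = upm (\<lambda>a. p (g a))"
    by (rule ext, simp add: upm_def split: nat.split)
  ultimately show ?case using Mu by simp
qed simp_all

lemma ren_sub: "ren r g (gsub s f p t) = gsub (\<lambda>i. ren r g (s i)) (\<lambda>a. g (f a)) (\<lambda>a. map (ren r g) (p a)) t"
proof (induction t arbitrary: s f p r g)
  case (Lam t)
  have "(\<lambda>i. ren (upr r) g (upl s i)) = upl (\<lambda>i. ren r g (s i))"
    by (rule ext, simp add: upl_def ren_ren split: nat.split)
  moreover have "(\<lambda>a. map (ren (upr r) g) (map (ren Suc (\<lambda>a. a)) (p a))) =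
     (\<lambda>a. map (ren Suc (\<lambda>a. a)) (map (ren r g) (p a)))"
    by (simp add: ren_ren comp_def)
  ultimately show ?case using Lam by simp
next
  case (Mu t)
  have "(\<lambda>i. ren r (upr g) (ren (\<lambda>i. i) Suc (s i))) = (\<lambda>i. ren (\<lambda>i. i) Suc (ren r g (s i)))"
    by (simp add: ren_ren)
  moreover have "(\<lambda>a. upr g (upr f a)) = upr (\<lambda>a. g (f a))" by (rule upr_comp)
  moreover have "(\<lambda>a. map (ren r (upr g)) (upm p a)) = upm (\<lambda>a. map (ren r g) (p a))"
    by (rule ext, simp add: upm_def ren_ren split: nat.split)
  ultimately show ?case using Mu by simp
qed (simp_all add: ren_appl)

lemma sub_sub: "gsub s2 f2 p2 (gsub s1 f1 p1 t) =
  gsub (\<lambda>i. gsub s2 f2 p2 (s1 i)) (\<lambda>a. f2 (f1 a)) (\<lambda>a. map (gsub s2 f2 p2) (p1 a) @ p2 (f1 a)) t"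
proof (induction t arbitrary: s1 f1 p1 s2 f2 p2)
  case (Lam t)
  have L: "gsub (upl s2) f2 (\<lambda>a. map (ren Suc (\<lambda>a. a)) (p2 a)) (ren Suc (\<lambda>a. a) u) =
        ren Suc (\<lambda>a. a) (gsub s2 f2 p2 u)" for u
    by (simp add: sub_ren ren_sub)
  have "(\<lambda>i. gsub (upl s2) f2 (\<lambda>a. map (ren Suc (\<lambda>a. a)) (p2 a)) (upl s1 i)) =
        upl (\<lambda>i. gsub s2 f2 p2 (s1 i))"
    by (rule ext, simp add: upl_def L split: nat.split)
  moreover have "(\<lambda>a. map (gsub (upl s2) f2 (\<lambda>a. map (ren Suc (\<lambda>a. a)) (p2 a))) (map (ren Suc (\<lambda>a. a)) (p1 a))
      @ map (ren Suc (\<lambda>a. a)) (p2 (f1 a))) =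
      (\<lambda>a. map (ren Suc (\<lambda>a. a)) (map (gsub s2 f2 p2) (p1 a) @ p2 (f1 a)))"
    by (simp add: L comp_def)
  ultimately show ?case using Lam by simp
next
  case (Mu t)
  have L: "gsub (\<lambda>i. ren (\<lambda>i. i) Suc (s2 i)) (upr f2) (upm p2) (ren (\<lambda>i. i) Suc u) =
        ren (\<lambda>i. i) Suc (gsub s2 f2 p2 u)" for u
    by (simp add: sub_ren ren_sub)
  have "(\<lambda>i. gsub (\<lambda>i. ren (\<lambda>i. i) Suc (s2 i)) (upr f2) (upm p2) (ren (\<lambda>i. i) Suc (s1 i))) =
        (\<lambda>i. ren (\<lambda>i. i) Suc (gsub s2 f2 p2 (s1 i)))"
    by (simp add: L)
  moreover have "(\<lambda>a. upr f2 (upr f1 a)) = upr (\<lambda>a. f2 (f1 a))" by (rule upr_comp)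
  moreover have "(\<lambda>a. map (gsub (\<lambda>i. ren (\<lambda>i. i) Suc (s2 i)) (upr f2) (upm p2)) (upm p1 a) @ upm p2 (upr f1 a))
     = upm (\<lambda>a. map (gsub s2 f2 p2) (p1 a) @ p2 (f1 a))"
    by (rule ext, simp add: upm_def upr_def L split: nat.split)
  ultimately show ?case using Mu by simp
qed (simp_all add: gsub_appl)

lemma gsub_id: "gsub Var (\<lambda>a. a) (\<lambda>_. []) t = t"
  using ren_gsub[of "\<lambda>a. a" "\<lambda>a. a" t] by simp



lemma lift_l_ren: "lift_l k t = ren (\<lambda>i. if i < k then i else Suc i) (\<lambda>a. a) t"
proof (induction t arbitrary: k)
  case (Lam t)
  have "upr (\<lambda>i. if i < k then i else Suc i) = (\<lambda>i. if i < Suc k then i else Suc i)"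
    by (rule ext, simp add: upr_def split: nat.split)
  then show ?case using Lam by simp
qed simp_all

lemma lift_l0: "lift_l 0 t = ren Suc (\<lambda>a. a) t"
  by (simp add: lift_l_ren)

lemma lift_m_ren: "lift_m k t = ren (\<lambda>i. i) (\<lambda>a. if a < k then a else Suc a) t"
proof (induction t arbitrary: k)
  case (Mu t)
  have "upr (\<lambda>i. if i < k then i else Suc i) = (\<lambda>i. if i < Suc k then i else Suc i)"
    by (rule ext, simp add: upr_def split: nat.split)
  then show ?case using Mu by simp
qed simp_all

lemma lift_m0: "lift_m 0 t = ren (\<lambda>i. i) Suc t"
  by (simp add: lift_m_ren)

lemma subst_l_gsub: "subst_l t k s = gsub (\<lambda>i. if i < k then Var i else if i = k then s else Var (i - 1)) (\<lambda>a. a) (\<lambda>_. []) t"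
proof (induction t arbitrary: k s)
  case (Lam t)
  have "upl (\<lambda>i. if i < k then Var i else if i = k then s else Var (i - 1)) =
    (\<lambda>i. if i < Suc k then Var i else if i = Suc k then ren Suc (\<lambda>a. a) s else Var (i - 1))"
    by (rule ext, simp add: upl_def split: nat.split)
  then show ?case using Lam by (simp add: lift_l0)
next
  case (Mu t)
  have "(\<lambda>i. ren (\<lambda>i. i) Suc (if i < k then Var i else if i = k then s else Var (i - 1))) =
    (\<lambda>i. if i < k then Var i else if i = k then ren (\<lambda>i. i) Suc s else Var (i - 1))"
    by (rule ext, simp)
  moreover have "upm (\<lambda>_. []) = (\<lambda>_. [])" by (rule ext, simp add: upm_def split: nat.split)
  ultimately show ?case using Mu by (simp add: lift_m0)
qed simp_all

lemma subst_m_gsub: "subst_m t k v = gsub Var (\<lambda>a. a) (\<lambda>a. if a = k then [v] else []) t"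
proof (induction t arbitrary: k v)
  case (Lam t)
  have "upl Var = Var" by (rule ext, simp add: upl_def split: nat.split)
  moreover have "(\<lambda>a. map (ren Suc (\<lambda>a. a)) (if a = k then [v] else [])) =
      (\<lambda>a. if a = k then [ren Suc (\<lambda>a. a) v] else [])" by auto
  ultimately show ?case using Lam by (simp add: lift_l0)
next
  case (Mu t)
  have "upm (\<lambda>a. if a = k then [v] else []) = (\<lambda>a. if a = Suc k then [ren (\<lambda>i. i) Suc v] else [])"
    by (rule ext, simp add: upm_def split: nat.split)
  then show ?case using Mu by (simp add: lift_m0)
qed simp_all

lemma mu_bind_ren: "mu_bind a d t = ren (\<lambda>i. i) (\<lambda>b. if b < d then b else if b - d = a then d else Suc b) t"
proof (induction t arbitrary: d)
  case (Mu t)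
  have "upr (\<lambda>b. if b < d then b else if b - d = a then d else Suc b) =
       (\<lambda>b. if b < Suc d then b else if b - Suc d = a then Suc d else Suc b)"
    by (rule ext, simp add: upr_def split: nat.split)
  then show ?case using Mu by simp
qed simp_all

lemma mu_bind0: "mu_bind a 0 t = ren (\<lambda>i. i) (\<lambda>b. if b = a then 0 else Suc b) t"
  by (simp add: mu_bind_ren)

lemma red_refl[simp]: "red t t" by (simp add: red_def)
lemma red_step: "red1 t u \<Longrightarrow> red t u" by (simp add: red_def)
lemma red_trans: "red t u \<Longrightarrow> red u v \<Longrightarrow> red t v" by (simp add: red_def)

lemma red_lift:
  assumes "\<And>t u. red1 t u \<Longrightarrow> red1 (F t) (F u)" and "red t u" shows "red (F t) (F u)"
  using assms(2) unfolding red_def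
  by (induction rule: rtranclp_induct) (auto intro: rtranclp.rtrancl_into_rtrancl assms(1))

lemma red_appL: "red t u \<Longrightarrow> red (App t v) (App u v)"
  by (rule red_lift[where F="\<lambda>t. App t v"]) (auto intro: red1.appL)
lemma red_muC: "red t u \<Longrightarrow> red (Mu t) (Mu u)"
  by (rule red_lift[where F="Mu"]) (auto intro: red1.muC)
lemma red_nam: "red t u \<Longrightarrow> red (Nam a t) (Nam a u)"
  by (rule red_lift[where F="Nam a"]) (auto intro: red1.nam)
lemma red_appl: "red t u \<Longrightarrow> red (appl t vs) (appl u vs)"
  by (induction vs arbitrary: t u) (auto intro: red_appL)

lemma red1_ren: "red1 t u \<Longrightarrow> red1 (ren r g t) (ren r g u)"
proof (induction arbitrary: r g rule: red1.induct)
  case (beta u v)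
  have "ren r g (subst_l u 0 v) = subst_l (ren (upr r) g u) 0 (ren r g v)"
    unfolding subst_l_gsub
    apply (simp add: ren_sub sub_ren)
    apply (rule arg_cong[where f="\<lambda>s. gsub s _ _ _"])
    by (rule ext, simp add: upr_def split: nat.split)
  then show ?case using red1.beta[of "ren (upr r) g u" "ren r g v"] by simp
next
  case (mu u v)
  have "ren r (upr g) (subst_m u 0 (lift_m 0 v)) = subst_m (ren r (upr g) u) 0 (lift_m 0 (ren r g v))"
    unfolding subst_m_gsub lift_m0
    apply (simp add: ren_sub sub_ren ren_ren)
    apply (rule arg_cong[where f="\<lambda>p. gsub _ _ p _"])
    by (rule ext, simp add: ren_ren)
  then show ?case using red1.mu[of "ren r (upr g) u" "ren r g v"] by simp
qed (auto intro: red1.intros)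

lemma red_ren: "red t u \<Longrightarrow> red (ren r g t) (ren r g u)"
  by (rule red_lift[where F="ren r g"]) (rule red1_ren)

fun fvl :: "trm \<Rightarrow> nat set" where
  "fvl (Var i) = {i}"
| "fvl (Lam t) = {i. Suc i \<in> fvl t}"
| "fvl (App t u) = fvl t \<union> fvl u"
| "fvl (Mu t) = fvl t"
| "fvl (Nam a t) = fvl t"

fun fvm :: "trm \<Rightarrow> nat set" where
  "fvm (Var i) = {}"
| "fvm (Lam t) = fvm t"
| "fvm (App t u) = fvm t \<union> fvm u"
| "fvm (Mu t) = {a. Suc a \<in> fvm t}"
| "fvm (Nam a t) = insert a (fvm t)"

lemma finite_Suc_pre: "finite S \<Longrightarrow> finite {i. Suc i \<in> S}"
  using finite_vimageI[of S Suc] by (simp add: vimage_def)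

lemma finite_fvl: "finite (fvl t)"
  by (induction t) (simp_all add: finite_Suc_pre)
lemma finite_fvm: "finite (fvm t)"
  by (induction t) (simp_all add: finite_Suc_pre)

lemma ren_agree: "(\<forall>i\<in>fvl t. r i = r' i) \<Longrightarrow> (\<forall>a\<in>fvm t. g a = g' a) \<Longrightarrow> ren r g t = ren r' g' t"
proof (induction t arbitrary: r g r' g')
  case (Lam t)
  have "\<forall>i\<in>fvl t. upr r i = upr r' i" using Lam.prems(1) by (auto simp: upr_def split: nat.split)
  then show ?case using Lam by simp
next
  case (Mu t)
  have "\<forall>i\<in>fvm t. upr g i = upr g' i" using Mu.prems(2) by (auto simp: upr_def split: nat.split)
  then show ?case using Mu by simp
qed simp_all

lemma gsub_agree: "(\<forall>i\<in>fvl t. s i = s' i) \<Longrightarrow> (\<forall>a\<in>fvm t. f a = f' a \<and> p a = p' a) \<Longrightarrow>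
   gsub s f p t = gsub s' f' p' t"
proof (induction t arbitrary: s f p s' f' p')
  case (Lam t)
  have "\<forall>i\<in>fvl t. upl s i = upl s' i" using Lam.prems(1) by (auto simp: upl_def split: nat.split)
  then show ?case using Lam by simp
next
  case (Mu t)
  have "\<forall>i\<in>fvm t. upr f i = upr f' i \<and> upm p i = upm p' i" using Mu.prems(2)
    by (auto simp: upr_def upm_def split: nat.split)
  then show ?case using Mu by simp
next
  case (Nam a t)
  have "gsub s f p t = gsub s' f' p' t" using Nam.IH Nam.prems by simp
  then show ?case using Nam.prems by simp
qed simp_all



lemma red_mu_red: "red t u \<Longrightarrow> red_mu u c \<Longrightarrow> red_mu t c"
  unfolding red_mu_def by (blast intro: red_trans)

lemma red_mu_nam: "red_mu t c \<Longrightarrow> red_mu (Nam a t) c"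
  unfolding red_mu_def by (blast intro: red_nam Mset.nam_w)

lemma red_mu_mu: "red_mu t c \<Longrightarrow> red_mu (Mu (mu_bind a 0 t)) c"
  unfolding red_mu_def mu_bind0 by (blast intro: red_muC red_ren Mset.mu_w[unfolded mu_bind0])

lemma red_mu_base: "red_mu c c"
  unfolding red_mu_def using Mset.base red_refl by blast

locale RZ = fixes x :: nat and ys :: "nat list" and z :: "nat \<Rightarrow> nat"
begin

inductive GE :: "nat \<Rightarrow> trm \<Rightarrow> bool" where
  g1: "1 \<le> l \<Longrightarrow> l \<le> n \<Longrightarrow> red_mu w (apps (Var (z l)) ys) \<Longrightarrow> GE n w"
| g2: "red_mu w (apps (App (Var x) th) ys) \<Longrightarrow> GE (Suc n) (App th (Var (z (Suc n)))) \<Longrightarrow> GE n w"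

definition BotS :: "nat \<Rightarrow> trm set" where "BotS n = {w. \<forall>m\<ge>n. GE m w}"

fun RR :: "ty \<Rightarrow> nat \<Rightarrow> trm set" where
  "RR (PV _) n = {t. apps t ys \<in> BotS n}"
| "RR Bot n = BotS n"
| "RR (Arr A B) n = {t. \<forall>m\<ge>n. \<forall>u\<in>RR A m. App t u \<in> RR B m}"

fun SS :: "ty \<Rightarrow> nat \<Rightarrow> trm list set" where
  "SS (PV _) n = {map Var ys}"
| "SS Bot n = {[]}"
| "SS (Arr A B) n = {u # pi | u pi. u \<in> RR A n \<and> pi \<in> SS B n}"

lemma BotS_mono: "n \<le> m \<Longrightarrow> w \<in> BotS n \<Longrightarrow> w \<in> BotS m"
  by (auto simp: BotS_def)

lemma RR_mono: "n \<le> m \<Longrightarrow> t \<in> RR A n \<Longrightarrow> t \<in> RR A m"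
  by (induction A) (auto intro: BotS_mono)

lemma SS_mono: "n \<le> m \<Longrightarrow> pi \<in> SS A n \<Longrightarrow> pi \<in> SS A m"
  by (induction A arbitrary: pi) (auto intro: RR_mono)

lemma GE_red: "GE n w' \<Longrightarrow> red w w' \<Longrightarrow> GE n w"
  by (cases rule: GE.cases) (auto intro: GE.intros red_mu_red)

lemma BotS_red: "w' \<in> BotS n \<Longrightarrow> red w w' \<Longrightarrow> w \<in> BotS n"
  by (auto simp: BotS_def intro: GE_red)

lemma red_apps: "red t u \<Longrightarrow> red (apps t ys) (apps u ys)"
  by (simp add: apps_appl red_appl)

lemma RR_red: "t' \<in> RR A n \<Longrightarrow> red t t' \<Longrightarrow> t \<in> RR A n"
proof (induction A arbitrary: t t' n)
  case (PV k) then show ?case by (auto intro: BotS_red red_apps)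
next
  case Bot then show ?case by (auto intro: BotS_red)
next
  case (Arr A B) then show ?case by simp (meson red_appL)
qed

lemma K1: "t \<in> RR A n \<Longrightarrow> pi \<in> SS A n \<Longrightarrow> appl t pi \<in> BotS n"
proof (induction A arbitrary: t pi)
  case (PV k) then show ?case by (simp add: apps_appl)
next
  case Bot then show ?case by simp
next
  case (Arr A B)
  then obtain u pi' where "pi = u # pi'" "u \<in> RR A n" "pi' \<in> SS B n" by auto
  then show ?case using Arr by auto
qed

lemma K2: "(\<forall>m\<ge>n. \<forall>pi\<in>SS A m. appl t pi \<in> BotS m) \<Longrightarrow> t \<in> RR A n"
proof (induction A arbitrary: t n)
  case (PV k) then show ?case by (simp add: apps_appl)
next
  case Bot then show ?case by simp
next
  case (Arr A B)
  show ?case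
  proof (simp, intro allI impI ballI)
    fix m u assume m: "n \<le> m" and u: "u \<in> RR A m"
    show "App t u \<in> RR B m"
    proof (rule Arr.IH(2), intro allI impI ballI)
      fix m' pi assume m': "m \<le> m'" and pi: "pi \<in> SS B m'"
      have s: "u # pi \<in> SS (Arr A B) m'" using RR_mono[OF m' u] pi by simp
      have "n \<le> m'" using m m' by simp
      with Arr.prems s have "appl t (u # pi) \<in> BotS m'" by blast
      then show "appl (App t u) pi \<in> BotS m'" by simp
    qed
  qed
qed

lemma BotS_nam: "w \<in> BotS n \<Longrightarrow> Nam a w \<in> BotS n"
proof -
  have "GE m w \<Longrightarrow> GE m (Nam a w)" for m
    by (cases rule: GE.cases) (auto intro: GE.intros red_mu_nam)
  then show "w \<in> BotS n \<Longrightarrow> Nam a w \<in> BotS n" by (auto simp: BotS_def)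
qed

lemma BotS_mu: "w \<in> BotS n \<Longrightarrow> Mu (mu_bind a 0 w) \<in> BotS n"
proof -
  have "GE m w \<Longrightarrow> GE m (Mu (mu_bind a 0 w))" for m
    by (cases rule: GE.cases) (auto intro: GE.intros red_mu_mu)
  then show "w \<in> BotS n \<Longrightarrow> Mu (mu_bind a 0 w) \<in> BotS n" by (auto simp: BotS_def)
qed

end


lemma gsub_cong: "s = s' \<Longrightarrow> f = f' \<Longrightarrow> p = p' \<Longrightarrow> gsub s f p t = gsub s' f' p' t" by simp

lemma beta_gsub: "subst_l (gsub (upl s) f (\<lambda>a. map (ren Suc (\<lambda>a. a)) (p a)) t) 0 u =
   gsub (\<lambda>i. case i of 0 \<Rightarrow> u | Suc j \<Rightarrow> s j) f p t"
  unfolding subst_l_gsub sub_sub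
  apply (rule gsub_cong)
    apply (rule ext, simp add: upl_def sub_ren gsub_id split: nat.split)
   apply simp
  apply (rule ext, simp add: sub_ren gsub_id comp_def)
  done

lemma mu_L: "gsub Var (\<lambda>a. a) (\<lambda>a. if a = 0 then [w] else []) (ren (\<lambda>i. i) Suc u) = ren (\<lambda>i. i) Suc u"
  by (subst sub_ren) (simp add: ren_gsub)

lemma mu_step: "subst_m (gsub (\<lambda>i. ren (\<lambda>i. i) Suc (s i)) (upr f) (\<lambda>a. map (ren (\<lambda>i. i) Suc) (q a)) t) 0 (lift_m 0 v)
  = gsub (\<lambda>i. ren (\<lambda>i. i) Suc (s i)) (upr f) (\<lambda>a. map (ren (\<lambda>i. i) Suc) ((q(0 := q 0 @ [v])) a)) t"
  unfolding subst_m_gsub lift_m0 sub_sub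
  apply (rule gsub_cong)
    apply (rule ext, simp add: mu_L)
   apply simp
  apply (rule ext, simp add: mu_L comp_def)
  done

lemma stack: "red (appl (Mu (gsub (\<lambda>i. ren (\<lambda>i. i) Suc (s i)) (upr f) (\<lambda>a. map (ren (\<lambda>i. i) Suc) (q a)) t)) pi)
  (Mu (gsub (\<lambda>i. ren (\<lambda>i. i) Suc (s i)) (upr f) (\<lambda>a. map (ren (\<lambda>i. i) Suc) ((q(0 := q 0 @ pi)) a)) t))"
proof (induction pi arbitrary: q)
  case Nil then show ?case by simp
next
  case (Cons v pi)
  let ?G = "gsub (\<lambda>i. ren (\<lambda>i. i) Suc (s i)) (upr f) (\<lambda>a. map (ren (\<lambda>i. i) Suc) (q a)) t"
  let ?q = "q(0 := q 0 @ [v])"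
  have step1: "red (appl (Mu ?G) (v # pi)) (appl (Mu (gsub (\<lambda>i. ren (\<lambda>i. i) Suc (s i)) (upr f) (\<lambda>a. map (ren (\<lambda>i. i) Suc) (?q a)) t)) pi)"
    unfolding appl_simps(2) mu_step[symmetric] by (rule red_appl, rule red_step, rule red1.mu)
  have step2: "red (appl (Mu (gsub (\<lambda>i. ren (\<lambda>i. i) Suc (s i)) (upr f) (\<lambda>a. map (ren (\<lambda>i. i) Suc) (?q a)) t)) pi)
     (Mu (gsub (\<lambda>i. ren (\<lambda>i. i) Suc (s i)) (upr f) (\<lambda>a. map (ren (\<lambda>i. i) Suc) ((?q(0 := ?q 0 @ pi)) a)) t))"
    by (rule Cons.IH)
  have eq: "?q(0 := ?q 0 @ pi) = q(0 := q 0 @ v # pi)" by simp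
  show ?case using red_trans[OF step1 step2] unfolding eq .
qed

context RZ begin

lemma adequacy: "typing \<Gamma> \<Delta> t A \<Longrightarrow> (\<forall>i<length \<Gamma>. s i \<in> RR (\<Gamma>!i) n) \<Longrightarrow>
  (\<forall>a<length \<Delta>. p a \<in> SS (\<Delta>!a) n) \<Longrightarrow> gsub s f p t \<in> RR A n"
proof (induction arbitrary: s f p n rule: typing.induct)
  case (ax i \<Gamma> \<Delta>) then show ?case by simp
next
  case (arr_i A \<Gamma> \<Delta> t B)
  show ?case
  proof (simp only: gsub.simps RR.simps, intro CollectI allI impI ballI)
    fix m u assume m: "n \<le> m" and u: "u \<in> RR A m"
    let ?s = "\<lambda>i. case i of 0 \<Rightarrow> u | Suc j \<Rightarrow> s j"
    have c1: "\<forall>i<length (A#\<Gamma>). ?s i \<in> RR ((A#\<Gamma>)!i) m"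
    proof (intro allI impI)
      fix i assume "i < length (A#\<Gamma>)"
      then show "?s i \<in> RR ((A#\<Gamma>)!i) m" using arr_i.prems(1) m u
        by (cases i) (auto intro: RR_mono)
    qed
    have c2: "\<forall>a<length \<Delta>. p a \<in> SS (\<Delta>!a) m" using arr_i.prems(2) m by (auto intro: SS_mono)
    have "gsub ?s f p t \<in> RR B m" using arr_i.IH[OF c1 c2] .
    moreover have "red (App (Lam (gsub (upl s) f (\<lambda>a. map (ren Suc (\<lambda>a. a)) (p a)) t)) u) (gsub ?s f p t)"
      using red_step[OF red1.beta[of "gsub (upl s) f (\<lambda>a. map (ren Suc (\<lambda>a. a)) (p a)) t" u]] unfolding beta_gsub .
    ultimately show "App (Lam (gsub (upl s) f (\<lambda>a. map (ren Suc (\<lambda>a. a)) (p a)) t)) u \<in> RR B m"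
      by (rule RR_red)
  qed
next
  case (arr_e \<Gamma> \<Delta> u A B v)
  have 1: "gsub s f p u \<in> RR (Arr A B) n" using arr_e.IH(1) arr_e.prems by blast
  have 2: "gsub s f p v \<in> RR A n" using arr_e.IH(2) arr_e.prems by blast
  show ?case using 1 2 by auto
next
  case (mu_i \<Gamma> A \<Delta> t)
  let ?q = "\<lambda>a. case a of 0 \<Rightarrow> [] | Suc b \<Rightarrow> p b"
  have upm: "upm p = (\<lambda>a. map (ren (\<lambda>i. i) Suc) (?q a))"
    by (rule ext, simp add: upm_def split: nat.split)
  show ?case
  proof (simp only: gsub.simps upm, rule K2, intro allI impI ballI)
    fix m pi assume m: "n \<le> m" and pi: "pi \<in> SS A m"
    let ?rp = "\<lambda>a. case a of 0 \<Rightarrow> pi | Suc b \<Rightarrow> p b"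
    let ?B = "gsub (\<lambda>i. ren (\<lambda>i. i) Suc (s i)) (upr f) (\<lambda>a. map (ren (\<lambda>i. i) Suc) ((?q(0 := ?q 0 @ pi)) a)) t"
    have R: "red (appl (Mu (gsub (\<lambda>i. ren (\<lambda>i. i) Suc (s i)) (upr f) (\<lambda>a. map (ren (\<lambda>i. i) Suc) (?q a)) t)) pi) (Mu ?B)"
      by (rule stack)
    define F where "F = (\<Union>i\<in>fvl t. fvm (s i)) \<union> f ` {c. Suc c \<in> fvm t} \<union> (\<Union>v\<in>set pi. fvm v)
       \<union> (\<Union>c\<in>{c. Suc c \<in> fvm t}. \<Union>v\<in>set (p c). fvm v)"
    have "finite F" unfolding F_def
      by (simp add: finite_fvl finite_fvm finite_Suc_pre)
    then obtain a where a: "a \<notin> F" using ex_new_if_finite[OF infinite_UNIV_nat] by blast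
    let ?fa = "\<lambda>b. case b of 0 \<Rightarrow> a | Suc c \<Rightarrow> f c"
    have c1: "\<forall>i<length \<Gamma>. s i \<in> RR (\<Gamma>!i) m" using mu_i.prems(1) m by (auto intro: RR_mono)
    have c2: "\<forall>b<length (A#\<Delta>). ?rp b \<in> SS ((A#\<Delta>)!b) m"
    proof (intro allI impI)
      fix b assume "b < length (A#\<Delta>)"
      then show "?rp b \<in> SS ((A#\<Delta>)!b) m" using mu_i.prems(2) m pi
        by (cases b) (auto intro: SS_mono)
    qed
    have W: "gsub s ?fa ?rp t \<in> BotS m" using mu_i.IH[OF c1 c2] by simp
    have eq: "mu_bind a 0 (gsub s ?fa ?rp t) = ?B"
      unfolding mu_bind0 ren_sub
    proof (rule gsub_agree)
      show "\<forall>i\<in>fvl t. ren (\<lambda>i. i) (\<lambda>b. if b = a then 0 else Suc b) (s i) = ren (\<lambda>i. i) Suc (s i)"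
      proof
        fix i assume i: "i \<in> fvl t"
        show "ren (\<lambda>i. i) (\<lambda>b. if b = a then 0 else Suc b) (s i) = ren (\<lambda>i. i) Suc (s i)"
          by (rule ren_agree) (use a i in \<open>auto simp: F_def\<close>)
      qed
    next
      show "\<forall>b\<in>fvm t. (if ?fa b = a then 0 else Suc (?fa b)) = upr f b \<and>
         map (ren (\<lambda>i. i) (\<lambda>b. if b = a then 0 else Suc b)) (?rp b) =
         map (ren (\<lambda>i. i) Suc) ((?q(0 := ?q 0 @ pi)) b)"
      proof
        fix b assume b: "b \<in> fvm t"
        show "(if ?fa b = a then 0 else Suc (?fa b)) = upr f b \<and>
         map (ren (\<lambda>i. i) (\<lambda>b. if b = a then 0 else Suc b)) (?rp b) =
         map (ren (\<lambda>i. i) Suc) ((?q(0 := ?q 0 @ pi)) b)"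
        proof (cases b)
          case 0
          have "map (ren (\<lambda>i. i) (\<lambda>b. if b = a then 0 else Suc b)) pi = map (ren (\<lambda>i. i) Suc) pi"
          proof (rule map_cong[OF refl])
            fix v assume "v \<in> set pi"
            then show "ren (\<lambda>i. i) (\<lambda>b. if b = a then 0 else Suc b) v = ren (\<lambda>i. i) Suc v"
              by (intro ren_agree) (use a in \<open>auto simp: F_def\<close>)
          qed
          then show ?thesis using 0 by simp
        next
          case (Suc c)
          have fc: "f c \<noteq> a" using a b Suc by (auto simp: F_def)
          have "map (ren (\<lambda>i. i) (\<lambda>b. if b = a then 0 else Suc b)) (p c) = map (ren (\<lambda>i. i) Suc) (p c)"
          proof (rule map_cong[OF refl])
            fix v assume "v \<in> set (p c)"
            then show "ren (\<lambda>i. i) (\<lambda>b. if b = a then 0 else Suc b) v = ren (\<lambda>i. i) Suc v"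
              by (intro ren_agree) (use a b Suc in \<open>auto simp: F_def\<close>)
          qed
          then show ?thesis using Suc fc by simp
        qed
      qed
    qed
    have "Mu ?B \<in> BotS m" using BotS_mu[OF W, of a] unfolding eq .
    then show "appl (Mu (gsub (\<lambda>i. ren (\<lambda>i. i) Suc (s i)) (upr f) (\<lambda>a. map (ren (\<lambda>i. i) Suc) (?q a)) t)) pi \<in> BotS m"
      using R by (rule BotS_red)
  qed
next
  case (bot_i a \<Delta> \<Gamma> t)
  have 1: "gsub s f p t \<in> RR (\<Delta>!a) n" using bot_i.IH bot_i.prems by blast
  have 2: "p a \<in> SS (\<Delta>!a) n" using bot_i.prems bot_i.hyps by blast
  show ?case using BotS_nam[OF K1[OF 1 2]] by simp
qed

lemma x_real: "Var x \<in> RR (Arr (neg (PV X)) (PV X)) 0"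
  unfolding RR.simps(3)
proof (intro CollectI allI impI ballI)
  fix m th assume th: "th \<in> RR (neg (PV X)) m"
  show "App (Var x) th \<in> RR (PV X) m"
    unfolding RR.simps(1) BotS_def
  proof (intro CollectI allI impI)
    fix m' assume m': "m \<le> m'"
    have u: "Var (z (Suc m')) \<in> RR (PV X) (Suc m')"
      by (auto simp: BotS_def intro!: GE.g1[of "Suc m'"] red_mu_base)
    have hm: "m \<le> Suc m'" using m' by simp
    have "App th (Var (z (Suc m'))) \<in> RR Bot (Suc m')"
      using th hm u unfolding neg_def RR.simps(3) by blast
    then have "GE (Suc m') (App th (Var (z (Suc m'))))" by (simp add: BotS_def)
    then show "GE m' (apps (App (Var x) th) ys)" by (rule GE.g2[OF red_mu_base])
  qed
qed

lemma E_GE: assumes "typing [] [] E (Arr (Arr (neg (PV X)) (PV X)) (PV X))"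
  shows "GE 0 (apps (App E (Var x)) ys)"
proof -
  have "gsub Var (\<lambda>a. a) (\<lambda>_. []) E \<in> RR (Arr (Arr (neg (PV X)) (PV X)) (PV X)) 0"
    by (rule adequacy[OF assms]) simp_all
  then have "E \<in> RR (Arr (Arr (neg (PV X)) (PV X)) (PV X)) 0" by (simp add: gsub_id)
  then have "App E (Var x) \<in> RR (PV X) 0" using x_real by auto
  then show ?thesis by (simp add: BotS_def)
qed

lemma chain_extract: "GE n w \<Longrightarrow> (\<exists>l. 1 \<le> l \<and> l \<le> n \<and> red_mu w (apps (Var (z l)) ys)) \<or>
  (\<exists>m>n. \<exists>th. red_mu w (apps (App (Var x) (th (Suc n))) ys)
     \<and> (\<forall>k. Suc n \<le> k \<and> k \<le> m - 1 \<longrightarrow> red_mu (App (th k) (Var (z k))) (apps (App (Var x) (th (Suc k))) ys))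
     \<and> (\<exists>l. 1 \<le> l \<and> l \<le> m \<and> red_mu (App (th m) (Var (z m))) (apps (Var (z l)) ys)))"
proof (induction rule: GE.induct)
  case (g1 l n w) then show ?case by blast
next
  case (g2 w th0 n)
  show ?case
  proof (rule disjI2)
    from g2.IH show "\<exists>m>n. \<exists>th. red_mu w (apps (App (Var x) (th (Suc n))) ys)
     \<and> (\<forall>k. Suc n \<le> k \<and> k \<le> m - 1 \<longrightarrow> red_mu (App (th k) (Var (z k))) (apps (App (Var x) (th (Suc k))) ys))
     \<and> (\<exists>l. 1 \<le> l \<and> l \<le> m \<and> red_mu (App (th m) (Var (z m))) (apps (Var (z l)) ys))"
    proof
      assume "\<exists>l. 1 \<le> l \<and> l \<le> Suc n \<and> red_mu (App th0 (Var (z (Suc n)))) (apps (Var (z l)) ys)"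
      then obtain l where l: "1 \<le> l" "l \<le> Suc n" "red_mu (App th0 (Var (z (Suc n)))) (apps (Var (z l)) ys)" by blast
      have A: "red_mu w (apps (App (Var x) ((\<lambda>_. th0) (Suc n))) ys)" using g2.hyps(1) by simp
      have B: "\<forall>k. Suc n \<le> k \<and> k \<le> Suc n - 1 \<longrightarrow> red_mu (App ((\<lambda>_. th0) k) (Var (z k))) (apps (App (Var x) ((\<lambda>_. th0) (Suc k))) ys)" by auto
      have C: "\<exists>l. 1 \<le> l \<and> l \<le> Suc n \<and> red_mu (App ((\<lambda>_. th0) (Suc n)) (Var (z (Suc n)))) (apps (Var (z l)) ys)" using l by auto
      show ?thesis
      proof (intro exI[of _ "Suc n"] conjI)
        show "n < Suc n" by simp
        show "\<exists>th. red_mu w (apps (App (Var x) (th (Suc n))) ys)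
     \<and> (\<forall>k. Suc n \<le> k \<and> k \<le> Suc n - 1 \<longrightarrow> red_mu (App (th k) (Var (z k))) (apps (App (Var x) (th (Suc k))) ys))
     \<and> (\<exists>l. 1 \<le> l \<and> l \<le> Suc n \<and> red_mu (App (th (Suc n)) (Var (z (Suc n)))) (apps (Var (z l)) ys))"
          by (rule exI[of _ "\<lambda>_. th0"]) (use A B C in blast)
      qed
    next
      assume "\<exists>m>Suc n. \<exists>th. red_mu (App th0 (Var (z (Suc n)))) (apps (App (Var x) (th (Suc (Suc n)))) ys)
     \<and> (\<forall>k. Suc (Suc n) \<le> k \<and> k \<le> m - 1 \<longrightarrow> red_mu (App (th k) (Var (z k))) (apps (App (Var x) (th (Suc k))) ys))
     \<and> (\<exists>l. 1 \<le> l \<and> l \<le> m \<and> red_mu (App (th m) (Var (z m))) (apps (Var (z l)) ys))"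
      then obtain m th where m: "m > Suc n"
        and h1: "red_mu (App th0 (Var (z (Suc n)))) (apps (App (Var x) (th (Suc (Suc n)))) ys)"
        and h2: "\<forall>k. Suc (Suc n) \<le> k \<and> k \<le> m - 1 \<longrightarrow> red_mu (App (th k) (Var (z k))) (apps (App (Var x) (th (Suc k))) ys)"
        and h3: "\<exists>l. 1 \<le> l \<and> l \<le> m \<and> red_mu (App (th m) (Var (z m))) (apps (Var (z l)) ys)" by blast
      let ?th = "th(Suc n := th0)"
      have "\<forall>k. Suc n \<le> k \<and> k \<le> m - 1 \<longrightarrow> red_mu (App (?th k) (Var (z k))) (apps (App (Var x) (?th (Suc k))) ys)"
      proof (intro allI impI)
        fix k assume k: "Suc n \<le> k \<and> k \<le> m - 1"
        show "red_mu (App (?th k) (Var (z k))) (apps (App (Var x) (?th (Suc k))) ys)"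
        proof (cases "k = Suc n")
          case True then show ?thesis using h1 by simp
        next
          case False then show ?thesis using h2 k by simp
        qed
      qed
      moreover have "?th m = th m" using m by simp
      moreover have "red_mu w (apps (App (Var x) (?th (Suc n))) ys)" using g2.hyps(1) by simp
      ultimately have A: "red_mu w (apps (App (Var x) (?th (Suc n))) ys)
     \<and> (\<forall>k. Suc n \<le> k \<and> k \<le> m - 1 \<longrightarrow> red_mu (App (?th k) (Var (z k))) (apps (App (Var x) (?th (Suc k))) ys))
     \<and> (\<exists>l. 1 \<le> l \<and> l \<le> m \<and> red_mu (App (?th m) (Var (z m))) (apps (Var (z l)) ys))"
        using h3 by simp
      show ?thesis
      proof (intro exI[of _ m] conjI)
        show "n < m" using m by simp
        show "\<exists>th. red_mu w (apps (App (Var x) (th (Suc n))) ys)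
     \<and> (\<forall>k. Suc n \<le> k \<and> k \<le> m - 1 \<longrightarrow> red_mu (App (th k) (Var (z k))) (apps (App (Var x) (th (Suc k))) ys))
     \<and> (\<exists>l. 1 \<le> l \<and> l \<le> m \<and> red_mu (App (th m) (Var (z m))) (apps (Var (z l)) ys))"
          by (rule exI[of _ ?th]) (rule A)
      qed
    qed
  qed
qed

end


theorem mainTheorem9:
  fixes E :: trm and X :: nat and x :: nat and ys :: "nat list" and z :: "nat \<Rightarrow> nat"
  assumes "closed E"
    and "typing [] [] E (Arr (Arr (neg (PV X)) (PV X)) (PV X))"
    and "\<forall>i\<ge>1. x \<noteq> z i"
    and "\<forall>y\<in>set ys. \<forall>i\<ge>1. y \<noteq> z i"
  shows "\<exists>m\<ge>1. \<exists>\<theta> :: nat \<Rightarrow> trm.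
           red_mu (apps (App E (Var x)) ys) (apps (App (Var x) (\<theta> 1)) ys)
         \<and> (\<forall>k. 1 \<le> k \<and> k \<le> m - 1 \<longrightarrow>
               red_mu (App (\<theta> k) (Var (z k))) (apps (App (Var x) (\<theta> (Suc k))) ys))
         \<and> (\<exists>l. 1 \<le> l \<and> l \<le> m \<and> red_mu (App (\<theta> m) (Var (z m))) (apps (Var (z l)) ys))"
proof -
  have "RZ.GE x ys z 0 (apps (App E (Var x)) ys)" by (rule RZ.E_GE[OF assms(2)])
  from RZ.chain_extract[OF this]
  obtain m th where m: "m > 0"
    and h1: "red_mu (apps (App E (Var x)) ys) (apps (App (Var x) (th (Suc 0))) ys)"
    and h2: "\<forall>k. Suc 0 \<le> k \<and> k \<le> m - 1 \<longrightarrow> red_mu (App (th k) (Var (z k))) (apps (App (Var x) (th (Suc k))) ys)"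
    and h3: "\<exists>l. 1 \<le> l \<and> l \<le> m \<and> red_mu (App (th m) (Var (z m))) (apps (Var (z l)) ys)"
    by auto
  show ?thesis
  proof (intro exI[of _ m] conjI)
    show "1 \<le> m" using m by simp
    show "\<exists>\<theta> :: nat \<Rightarrow> trm.
           red_mu (apps (App E (Var x)) ys) (apps (App (Var x) (\<theta> 1)) ys)
         \<and> (\<forall>k. 1 \<le> k \<and> k \<le> m - 1 \<longrightarrow>
               red_mu (App (\<theta> k) (Var (z k))) (apps (App (Var x) (\<theta> (Suc k))) ys))
         \<and> (\<exists>l. 1 \<le> l \<and> l \<le> m \<and> red_mu (App (\<theta> m) (Var (z m))) (apps (Var (z l)) ys))"
      by (rule exI[of _ th]) (use h1 h2 h3 in simp)
  qed
qed

end
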